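(* Let $\{X_t\},\{Y_t\}$ ($t\in T$) be stochastic processes with finite second moments such that $X_t\le_{\textnormal{d-ast}}Y_t$ as $t\to\infty$. Let $\psi:\mathbb{R}\to\mathbb{R}$ be strictly decreasing and Lipschitz continuous, with $\psi(X_t)$, $\psi(Y_t)$ having finite second moments for all $t$. If there exist $C>0$ and $t_0\in T$ with $\mathcal{W}_2^2(F_{X_t},F_{Y_t})\le C\,\mathcal{W}_2^2(F_{\psi(X_t)},F_{\psi(Y_t)})$ for all $t\ge t_0$, then $\psi(Y_t)\le_{\textnormal{d-ast}}\psi(X_t)$ as $t\to\infty$.
   Context: $T\subseteq\mathbb{R}$ is unbounded above; limits along $t\in T$. $F^{-1}(u)=\inf\{x:F(x)\ge u\}$. $\mathcal{W}_2(F,G)=(\int_0^1(F^{-1}-G^{-1})^2du)^{1/2}$. $\varepsilon_{\mathcal{W}_2}(F,G)=\mathcal{W}_2^{-2}(F,G)\int_{\{u\in(0,1):F^{-1}(u)>G^{-1}(u)\}}(F^{-1}-G^{-1})^2du$, set to $0$ if $\mathcal{W}_2(F,G)=0$. $X_t\le_{\textnormal{d-ast}}Y_t$ means $\lim_{t\to\infty}\varepsilon_{\mathcal{W}_2}(F_{X_t},F_{Y_t})=0$. *)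

theory Defs
  imports "HOL-Probability.Probability"
begin

definition distfun :: "'a measure \<Rightarrow> ('a \<Rightarrow> real) \<Rightarrow> real \<Rightarrow> real" where
  "distfun M X = cdf (distr M borel X)"

definition quantile :: "(real \<Rightarrow> real) \<Rightarrow> real \<Rightarrow> real" where
  "quantile F u = Inf {x. F x \<ge> u}"

definition W2 :: "(real \<Rightarrow> real) \<Rightarrow> (real \<Rightarrow> real) \<Rightarrow> real" where
  "W2 F G = sqrt (LINT u:{0<..<1}|lborel. (quantile F u - quantile G u)\<^sup>2)"

definition eps_W2 :: "(real \<Rightarrow> real) \<Rightarrow> (real \<Rightarrow> real) \<Rightarrow> real" where
  "eps_W2 F G = (if W2 F G = 0 then 0 else
     (LINT u:{u\<in>{0<..<1}. quantile F u > quantile G u}|lborel. (quantile F u - quantile G u)\<^sup>2)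
       / (W2 F G)\<^sup>2)"

definition d_ast :: "real set \<Rightarrow> 'a measure \<Rightarrow> (real \<Rightarrow> 'a \<Rightarrow> real) \<Rightarrow> (real \<Rightarrow> 'a \<Rightarrow> real) \<Rightarrow> bool" where
  "d_ast T M X Y \<longleftrightarrow>
     ((\<lambda>t. eps_W2 (distfun M (X t)) (distfun M (Y t))) \<longlongrightarrow> 0) (inf at_top (principal T))"

end

theory Submission
  imports Defs
begin


lemma q_basic:
  assumes "real_distribution N"
  shows q_pseudo: "\<And>u x. 0 < u \<Longrightarrow> u < 1 \<Longrightarrow> u \<le> cdf N x \<longleftrightarrow> quantile (cdf N) u \<le> x"
    and q_mono: "mono_on {0<..<1} (quantile (cdf N))"
    and q_meas: "quantile (cdf N) \<in> borel_measurable (restrict_space lborel {0<..<1})"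
    and q_distr: "distr (restrict_space lborel {0<..<1}) borel (quantile (cdf N)) = N"
proof -
  interpret N: cdf_distribution N using assms by (simp add: cdf_distribution_def)
  have qe: "quantile (cdf N) = (\<lambda>u. Inf {x. u \<le> cdf N x})"
    by (simp add: quantile_def[abs_def])
  show "\<And>u x. 0 < u \<Longrightarrow> u < 1 \<Longrightarrow> u \<le> cdf N x \<longleftrightarrow> quantile (cdf N) u \<le> x"
    unfolding qe using N.pseudoinverse by blast
  show "mono_on {0<..<1} (quantile (cdf N))" unfolding qe by (rule N.mono_I)
  have "quantile (cdf N) \<in> borel_measurable (restrict_space borel {0<..<1})"
    unfolding qe by (rule N.measurable_CI)
  then show "quantile (cdf N) \<in> borel_measurable (restrict_space lborel {0<..<1})"
    using measurable_cong_sets[of "restrict_space lborel {0<..<1}" "restrict_space borel {0<..<1}" borel borel]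
    by (simp add: sets_restrict_space)
  show "distr (restrict_space lborel {0<..<1}) borel (quantile (cdf N)) = N"
    unfolding qe by (rule N.distr_I_eq_M)
qed

lemma q_sq_integrable:
  assumes "prob_space M" "X \<in> borel_measurable M" "integrable M (\<lambda>\<omega>. (X \<omega>)\<^sup>2)"
  shows "integrable (restrict_space lborel {0<..<1}) (\<lambda>u. (quantile (distfun M X) u)\<^sup>2)"
proof -
  interpret prob_space M by fact
  let ?N = "distr M borel X"
  have rd: "real_distribution ?N" using assms(2) by simp
  have "integrable ?N (\<lambda>x. x\<^sup>2)"
    using assms(2,3) by (subst integrable_distr_eq) auto
  then have "integrable (distr (restrict_space lborel {0<..<1}) borel (quantile (cdf ?N))) (\<lambda>x. x\<^sup>2)"
    using q_distr[OF rd] by simp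
  then show ?thesis
    using q_meas[OF rd] by (subst (asm) integrable_distr_eq) (auto simp: distfun_def)
qed



lemma quantile_decr:
  fixes M :: "'a measure" and X :: "'a \<Rightarrow> real" and \<psi> :: "real \<Rightarrow> real"
  assumes PS: "prob_space M" and Xm: "X \<in> borel_measurable M"
    and dec: "\<And>x y. x < y \<Longrightarrow> \<psi> y < \<psi> x" and cont: "continuous_on UNIV \<psi>"
  shows "countable {u \<in> {0<..<1}. quantile (distfun M (\<lambda>\<omega>. \<psi> (X \<omega>))) u \<noteq> \<psi> (quantile (distfun M X) (1-u))}"
proof -
  interpret prob_space M by fact
  have psim[measurable]: "\<psi> \<in> borel_measurable borel" using cont by (rule borel_measurable_continuous_onI)
  have Xm'[measurable]: "X \<in> borel_measurable M" by fact
  define NX where "NX = distr M borel X"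
  define NP where "NP = distr M borel (\<lambda>\<omega>. \<psi> (X \<omega>))"
  have rX: "real_distribution NX" unfolding NX_def by simp
  have rP: "real_distribution NP" unfolding NP_def by simp
  interpret NX: real_distribution NX by (rule rX)
  define qF where "qF = quantile (cdf NX)"
  define qG where "qG = quantile (cdf NP)"
  have dec_le: "\<psi> x \<le> \<psi> y \<longleftrightarrow> y \<le> x" for x y
    using dec[of x y] dec[of y x] by (cases x y rule: linorder_cases) auto
  have GX: "cdf NP (\<psi> a) = measure NX {a..}" for a
  proof -
    have "cdf NP (\<psi> a) = measure M ((\<lambda>\<omega>. \<psi> (X \<omega>)) -` {..\<psi> a} \<inter> space M)"
      unfolding cdf_def NP_def by (simp add: measure_distr)
    also have "\<dots> = measure M (X -` {a..} \<inter> space M)"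
      by (rule arg_cong[where f="measure M"]) (auto simp: dec_le)
    also have "\<dots> = measure NX {a..}" unfolding NX_def by (simp add: measure_distr)
    finally show ?thesis .
  qed
  have GX2: "cdf NP b \<le> measure NX {a<..}" if "b < \<psi> a" for a b
  proof -
    have "cdf NP b = measure M ((\<lambda>\<omega>. \<psi> (X \<omega>)) -` {..b} \<inter> space M)"
      unfolding cdf_def NP_def by (simp add: measure_distr)
    also have "\<dots> \<le> measure M (X -` {a<..} \<inter> space M)"
    proof (rule finite_measure_mono)
      show "(\<lambda>\<omega>. \<psi> (X \<omega>)) -` {..b} \<inter> space M \<subseteq> X -` {a<..} \<inter> space M"
        using that by (auto simp: not_less[symmetric] dec_le) (metis dec_le less_le_trans not_le)
    qed simp
    also have "\<dots> = measure NX {a<..}" unfolding NX_def by (simp add: measure_distr)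
    finally show ?thesis .
  qed
  have A: "qG u \<le> \<psi> (qF (1-u))" if u: "0 < u" "u < 1" for u
  proof -
    define a where "a = qF (1-u)"
    have "measure NX {..<a} \<le> 1 - u"
    proof (rule tendsto_upperbound[OF NX.cdf_at_left])
      show "\<forall>\<^sub>F x in at_left a. cdf NX x \<le> 1 - u"
      proof (rule eventually_at_leftI[of "a - 1"])
        fix x assume "x \<in> {a - 1<..<a}"
        then have "\<not> qF (1-u) \<le> x" by (auto simp: a_def)
        then show "cdf NX x \<le> 1 - u" using q_pseudo[OF rX, of "1-u" x] u by (auto simp: qF_def)
      qed simp
    qed simp
    moreover have "measure NX {a..} = 1 - measure NX {..<a}"
      using NX.prob_compl[of "{..<a}"] by (simp add: Compl_eq_Diff_UNIV[symmetric] flip: Compl_eq_Diff_UNIV) 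
    ultimately have "u \<le> cdf NP (\<psi> a)" using GX by simp
    then show ?thesis using q_pseudo[OF rP, of u] u by (auto simp: qG_def a_def)
  qed
  have B: "\<psi> (qF (1-u)) \<le> qG u'" if u: "0 < u" "u < u'" "u' < 1" for u u'
  proof (rule ccontr)
    define a where "a = qF (1-u)"
    assume "\<not> \<psi> (qF (1-u)) \<le> qG u'"
    then have lt: "qG u' < \<psi> a" by (simp add: a_def)
    have "u' \<le> cdf NP (qG u')" using q_pseudo[OF rP, of u' "qG u'"] u by (simp add: qG_def)
    also have "\<dots> \<le> measure NX {a<..}" by (rule GX2[OF lt])
    also have "measure NX {a<..} = 1 - cdf NX a"
      using NX.prob_compl[of "{..a}"] by (simp add: cdf_def flip: Compl_eq_Diff_UNIV) 
    also have "1 - u \<le> cdf NX a" using q_pseudo[OF rX, of "1-u" a] u by (simp add: a_def qF_def)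
    then have "1 - cdf NX a \<le> u" by simp
    finally show False using u by simp
  qed
  have eq: "qG u = \<psi> (qF (1-u))" if u: "0 < u" "u < 1" and c: "isCont qG u" for u
  proof -
    have "\<psi> (qF (1-u)) \<le> qG u"
    proof (rule tendsto_lowerbound)
      show "(qG \<longlongrightarrow> qG u) (at_right u)" using c by (simp add: isCont_def filterlim_at_split)
      show "\<forall>\<^sub>F x in at_right u. \<psi> (qF (1-u)) \<le> qG x"
        using B u by (intro eventually_at_rightI[of u 1]) auto
    qed simp
    then show ?thesis using A[OF u] by simp
  qed
  have "{u \<in> {0<..<1}. qG u \<noteq> \<psi> (qF (1-u))} \<subseteq> {u \<in> {0<..<1}. \<not> isCont qG u}"
    using eq by auto
  moreover have "countable {u \<in> {0<..<1}. \<not> isCont qG u}"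
    using mono_on_ctble_discont[OF q_mono[OF rP]]
    by (simp add: at_within_open[of _ "{0 <..< 1}"] qG_def cong: conj_cong)
  ultimately show ?thesis
    by (auto simp: qG_def qF_def NP_def NX_def distfun_def intro: countable_subset)
qed



lemma W2_sym: "W2 F G = W2 G F"
  unfolding W2_def by (simp add: power2_commute)

lemma integral_le_nonint:
  fixes f g :: "real \<Rightarrow> real"
  assumes "integrable lborel g" "AE x in lborel. f x \<le> g x" "\<And>x. 0 \<le> g x"
  shows "integral\<^sup>L lborel f \<le> integral\<^sup>L lborel g"
proof (cases "integrable lborel f")
  case True then show ?thesis using assms by (intro integral_mono_AE) auto
next
  case False then show ?thesis using assms by (simp add: not_integrable_integral_eq integral_nonneg)
qed

lemma eps_bound:
  fixes M :: "'a measure" and X Y :: "'a \<Rightarrow> real" and \<psi> :: "real \<Rightarrow> real"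
  assumes PS: "prob_space M" and Xm[measurable]: "X \<in> borel_measurable M" and Ym[measurable]: "Y \<in> borel_measurable M"
    and X2: "integrable M (\<lambda>\<omega>. (X \<omega>)\<^sup>2)" and Y2: "integrable M (\<lambda>\<omega>. (Y \<omega>)\<^sup>2)"
    and dec: "\<And>x y. x < y \<Longrightarrow> \<psi> y < \<psi> x" and cont: "continuous_on UNIV \<psi>"
    and lip: "\<And>x y. \<bar>\<psi> x - \<psi> y\<bar> \<le> L * \<bar>x - y\<bar>" and L: "0 \<le> L" and C: "0 < C"
    and hyp: "(W2 (distfun M X) (distfun M Y))\<^sup>2
             \<le> C * (W2 (distfun M (\<lambda>\<omega>. \<psi> (X \<omega>))) (distfun M (\<lambda>\<omega>. \<psi> (Y \<omega>))))\<^sup>2"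
  shows "0 \<le> eps_W2 (distfun M (\<lambda>\<omega>. \<psi> (Y \<omega>))) (distfun M (\<lambda>\<omega>. \<psi> (X \<omega>)))
     \<and> eps_W2 (distfun M (\<lambda>\<omega>. \<psi> (Y \<omega>))) (distfun M (\<lambda>\<omega>. \<psi> (X \<omega>)))
        \<le> L\<^sup>2 * C * eps_W2 (distfun M X) (distfun M Y)"
proof -
  interpret prob_space M by fact
  define I01 where "I01 = {0<..<1::real}"
  define \<Omega> where "\<Omega> = restrict_space lborel I01"
  define a where "a = quantile (distfun M X)"
  define b where "b = quantile (distfun M Y)"
  define A where "A = quantile (distfun M (\<lambda>\<omega>. \<psi> (X \<omega>)))"
  define B where "B = quantile (distfun M (\<lambda>\<omega>. \<psi> (Y \<omega>)))"
  have am[measurable]: "a \<in> borel_measurable \<Omega>"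
    unfolding a_def \<Omega>_def I01_def distfun_def by (rule q_meas) simp
  have bm[measurable]: "b \<in> borel_measurable \<Omega>"
    unfolding b_def \<Omega>_def I01_def distfun_def by (rule q_meas) simp
  have a2: "integrable \<Omega> (\<lambda>u. (a u)\<^sup>2)"
    unfolding a_def \<Omega>_def I01_def using q_sq_integrable[OF PS Xm X2] .
  have b2: "integrable \<Omega> (\<lambda>u. (b u)\<^sup>2)"
    unfolding b_def \<Omega>_def I01_def using q_sq_integrable[OF PS Ym Y2] .
  have ab2: "integrable \<Omega> (\<lambda>u. 2 * (a u)\<^sup>2 + 2 * (b u)\<^sup>2)" using a2 b2 by auto
  have sqb: "(x - y)\<^sup>2 \<le> 2 * x\<^sup>2 + 2 * y\<^sup>2" for x y :: real
  proof -
    have "(x - y)\<^sup>2 + (x + y)\<^sup>2 = 2 * x\<^sup>2 + 2 * y\<^sup>2" by (simp add: power2_eq_square algebra_simps)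
    moreover have "0 \<le> (x + y)\<^sup>2" by simp
    ultimately show ?thesis by linarith
  qed
  have h1: "integrable \<Omega> (\<lambda>u. (a u - b u)\<^sup>2)"
    by (rule Bochner_Integration.integrable_bound[OF ab2]) (auto simp: sqb intro!: AE_I2)
  have h2: "integrable \<Omega> (\<lambda>u. indicator {u. b u < a u} u * (a u - b u)\<^sup>2)"
  proof (rule Bochner_Integration.integrable_bound[OF ab2])
    show "(\<lambda>u. indicator {u. b u < a u} u * (a u - b u)\<^sup>2) \<in> borel_measurable \<Omega>"
    proof -
      have "(\<lambda>u. indicator {u. b u < a u} u * (a u - b u)\<^sup>2) = (\<lambda>u. (if b u < a u then (a u - b u)\<^sup>2 else 0) :: real)"
        by (auto simp: indicator_def)
      then show ?thesis by simp
    qed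
  qed (auto simp: sqb indicator_def intro!: AE_I2)
  have sI: "I01 \<inter> space lborel \<in> sets lborel" by (simp add: I01_def)
  define SX where "SX = {u \<in> I01. b u < a u}"
  define P1 where "P1 u = indicator I01 u * (a u - b u)\<^sup>2" for u
  define PX where "PX u = indicator SX u * (a u - b u)\<^sup>2" for u
  have P1i: "integrable lborel P1"
    using h1 unfolding \<Omega>_def P1_def by (subst (asm) integrable_restrict_space[OF sI]) simp
  have PXe: "PX = (\<lambda>u. indicator I01 u *\<^sub>R (indicator {u. b u < a u} u * (a u - b u)\<^sup>2))"
    by (auto simp: PX_def SX_def indicator_def fun_eq_iff)
  have PXi: "integrable lborel PX"
    using h2 unfolding \<Omega>_def PXe by (subst (asm) integrable_restrict_space[OF sI]) simp
  have PX_le: "PX u \<le> P1 u" for u by (auto simp: PX_def P1_def SX_def indicator_def)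
  have PX0: "0 \<le> PX u" for u by (auto simp: PX_def indicator_def)
  define w where "w = integral\<^sup>L lborel P1"
  define nX where "nX = integral\<^sup>L lborel PX"
  have w0: "0 \<le> w" unfolding w_def P1_def by (intro integral_nonneg_AE AE_I2) auto
  have W2X: "(W2 (distfun M X) (distfun M Y))\<^sup>2 = w"
    unfolding W2_def w_def P1_def a_def b_def I01_def set_lebesgue_integral_def
    using w0 unfolding w_def P1_def a_def b_def I01_def by simp
  have numX: "(LINT u:{u\<in>{0<..<1}. quantile (distfun M X) u > quantile (distfun M Y) u}|lborel.
        (quantile (distfun M X) u - quantile (distfun M Y) u)\<^sup>2) = nX"
    unfolding nX_def PX_def SX_def a_def b_def I01_def set_lebesgue_integral_def by simp
  have nXw: "nX \<le> w" unfolding nX_def w_def using PXi P1i PX_le by (intro integral_mono) auto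
  have nX0: "0 \<le> nX" unfolding nX_def using PX0 by (intro integral_nonneg_AE AE_I2) auto
  have refl_i: "integrable lborel (\<lambda>u. PX (1 - u))"
    using lborel_integrable_real_affine[OF PXi, of "-1" 1] by simp
  have refl_e: "integral\<^sup>L lborel (\<lambda>u. PX (1 - u)) = nX"
    using lborel_integral_real_affine[of "-1" PX 1] unfolding nX_def by simp
  define S\<psi> where "S\<psi> = {u \<in> I01. A u < B u}"
  define P\<psi> where "P\<psi> u = indicator S\<psi> u * (B u - A u)\<^sup>2" for u
  define n\<psi> where "n\<psi> = integral\<^sup>L lborel P\<psi>"
  have num\<psi>: "(LINT u:{u\<in>{0<..<1}. quantile (distfun M (\<lambda>\<omega>. \<psi> (Y \<omega>))) u > quantile (distfun M (\<lambda>\<omega>. \<psi> (X \<omega>))) u}|lborel.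
        (quantile (distfun M (\<lambda>\<omega>. \<psi> (Y \<omega>))) u - quantile (distfun M (\<lambda>\<omega>. \<psi> (X \<omega>))) u)\<^sup>2) = n\<psi>"
    unfolding n\<psi>_def P\<psi>_def S\<psi>_def A_def B_def I01_def set_lebesgue_integral_def by simp
  have n\<psi>0: "0 \<le> n\<psi>" unfolding n\<psi>_def P\<psi>_def by (intro integral_nonneg_AE AE_I2) auto
  define DX where "DX = {u \<in> {0<..<1}. A u \<noteq> \<psi> (a (1-u))}"
  define DY where "DY = {u \<in> {0<..<1}. B u \<noteq> \<psi> (b (1-u))}"
  have cD: "countable (DX \<union> DY)"
    unfolding DX_def DY_def A_def B_def a_def b_def
    using quantile_decr[OF PS Xm dec cont] quantile_decr[OF PS Ym dec cont] by simp
  have dec_lt: "\<psi> x < \<psi> y \<longleftrightarrow> y < x" for x y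
    using dec[of x y] dec[of y x] by (cases x y rule: linorder_cases) auto
  have lip2: "(\<psi> x - \<psi> y)\<^sup>2 \<le> L\<^sup>2 * (x - y)\<^sup>2" for x y
  proof -
    have "\<bar>\<psi> x - \<psi> y\<bar>\<^sup>2 \<le> (L * \<bar>x - y\<bar>)\<^sup>2" by (rule power_mono[OF lip]) simp
    then show ?thesis by (simp add: power_mult_distrib)
  qed
  have pt: "P\<psi> u \<le> L\<^sup>2 * PX (1 - u)" if "u \<notin> DX \<union> DY" for u
  proof (cases "u \<in> I01")
    case True
    then have eqs: "A u = \<psi> (a (1-u))" "B u = \<psi> (b (1-u))" "1 - u \<in> I01"
      using that by (auto simp: DX_def DY_def I01_def)
    have "u \<in> S\<psi> \<longleftrightarrow> 1 - u \<in> SX" using True eqs by (auto simp: S\<psi>_def SX_def dec_lt)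
    then show ?thesis
      using lip2[of "b (1-u)" "a (1-u)"] eqs
      by (auto simp: P\<psi>_def PX_def indicator_def power2_commute)
  next
    case False
    then have "u \<notin> S\<psi>" "1 - u \<notin> SX" by (auto simp: S\<psi>_def SX_def I01_def)
    then show ?thesis by (simp add: P\<psi>_def PX_def)
  qed
  have n\<psi>le: "n\<psi> \<le> L\<^sup>2 * nX"
  proof -
    have "n\<psi> \<le> integral\<^sup>L lborel (\<lambda>u. L\<^sup>2 * PX (1 - u))"
      unfolding n\<psi>_def
    proof (rule integral_le_nonint)
      show "integrable lborel (\<lambda>u. L\<^sup>2 * PX (1 - u))" using refl_i by simp
      show "AE x in lborel. P\<psi> x \<le> L\<^sup>2 * PX (1 - x)"
        by (rule AE_I'[OF countable_imp_null_set_lborel[OF cD]]) (use pt in force)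
      show "0 \<le> L\<^sup>2 * PX (1 - x)" for x using PX0 by simp
    qed
    also have "\<dots> = L\<^sup>2 * nX" using refl_e by simp
    finally show ?thesis .
  qed
  define W\<psi> where "W\<psi> = W2 (distfun M (\<lambda>\<omega>. \<psi> (Y \<omega>))) (distfun M (\<lambda>\<omega>. \<psi> (X \<omega>)))"
  have hyp': "w \<le> C * W\<psi>\<^sup>2" using hyp W2X unfolding W\<psi>_def by (simp add: W2_sym)
  have epsX: "eps_W2 (distfun M X) (distfun M Y) = (if w = 0 then 0 else nX / w)"
    unfolding eps_W2_def numX using W2X w0
    by (cases "W2 (distfun M X) (distfun M Y) = 0") auto
  have eps\<psi>: "eps_W2 (distfun M (\<lambda>\<omega>. \<psi> (Y \<omega>))) (distfun M (\<lambda>\<omega>. \<psi> (X \<omega>))) = (if W\<psi> = 0 then 0 else n\<psi> / W\<psi>\<^sup>2)"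
    unfolding eps_W2_def num\<psi> W\<psi>_def by simp
  show ?thesis
  proof (cases "W\<psi> = 0")
    case True
    then show ?thesis using epsX eps\<psi> nX0 w0 C by (simp add: divide_nonneg_nonneg)
  next
    case False
    then have p: "0 < W\<psi>\<^sup>2" by simp
    show ?thesis
    proof (cases "w = 0")
      case True
      then have "nX = 0" using nX0 nXw by simp
      then have "n\<psi> = 0" using n\<psi>le n\<psi>0 by simp
      then show ?thesis using epsX eps\<psi> False True by simp
    next
      case wne: False
      then have wp: "0 < w" using w0 by simp
      have "n\<psi> / W\<psi>\<^sup>2 \<le> L\<^sup>2 * C * (nX / w)"
      proof -
        have "n\<psi> \<le> L\<^sup>2 * nX" by (rule n\<psi>le)
        also have "nX = (nX / w) * w" using wp by simp
        also have "L\<^sup>2 * ((nX / w) * w) \<le> L\<^sup>2 * ((nX / w) * (C * W\<psi>\<^sup>2))"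
          using hyp' nX0 wp by (intro mult_left_mono) (auto intro: divide_nonneg_pos)
        finally show ?thesis using p by (simp add: divide_le_eq algebra_simps)
      qed
      then show ?thesis using epsX eps\<psi> False wne n\<psi>0 p by simp
    qed
  qed
qed


theorem corollary2p7:
  fixes T :: "real set" and M :: "'a measure"
    and X Y :: "real \<Rightarrow> 'a \<Rightarrow> real" and \<psi> :: "real \<Rightarrow> real"
  assumes "prob_space M"
    and "\<forall>b. \<exists>t\<in>T. t \<ge> b"
    and "\<And>t. t \<in> T \<Longrightarrow> X t \<in> borel_measurable M"
    and "\<And>t. t \<in> T \<Longrightarrow> Y t \<in> borel_measurable M"
    and "\<And>t. t \<in> T \<Longrightarrow> integrable M (\<lambda>\<omega>. (X t \<omega>)\<^sup>2)"
    and "\<And>t. t \<in> T \<Longrightarrow> integrable M (\<lambda>\<omega>. (Y t \<omega>)\<^sup>2)"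
    and "d_ast T M X Y"
    and "\<And>x y. x < y \<Longrightarrow> \<psi> y < \<psi> x"
    and "\<exists>L. \<forall>x y. \<bar>\<psi> x - \<psi> y\<bar> \<le> L * \<bar>x - y\<bar>"
    and "\<And>t. t \<in> T \<Longrightarrow> integrable M (\<lambda>\<omega>. (\<psi> (X t \<omega>))\<^sup>2)"
    and "\<And>t. t \<in> T \<Longrightarrow> integrable M (\<lambda>\<omega>. (\<psi> (Y t \<omega>))\<^sup>2)"
    and "\<exists>C>0. \<exists>t0\<in>T. \<forall>t\<in>T. t \<ge> t0 \<longrightarrow>
           (W2 (distfun M (X t)) (distfun M (Y t)))\<^sup>2
             \<le> C * (W2 (distfun M (\<lambda>\<omega>. \<psi> (X t \<omega>))) (distfun M (\<lambda>\<omega>. \<psi> (Y t \<omega>))))\<^sup>2"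
  shows "d_ast T M (\<lambda>t \<omega>. \<psi> (Y t \<omega>)) (\<lambda>t \<omega>. \<psi> (X t \<omega>))"
proof -
  obtain L where lip: "\<And>x y. \<bar>\<psi> x - \<psi> y\<bar> \<le> L * \<bar>x - y\<bar>" using assms(9) by blast
  have L: "0 \<le> L" using lip[of 1 0] assms(8)[of 0 1] by simp
  have "L-lipschitz_on UNIV \<psi>" using lip L by (simp add: lipschitz_on_def dist_real_def)
  then have cont: "continuous_on UNIV \<psi>" by (rule lipschitz_on_continuous_on)
  obtain C t0 where C: "0 < C" and hypC: "\<forall>t\<in>T. t \<ge> t0 \<longrightarrow>
           (W2 (distfun M (X t)) (distfun M (Y t)))\<^sup>2
             \<le> C * (W2 (distfun M (\<lambda>\<omega>. \<psi> (X t \<omega>))) (distfun M (\<lambda>\<omega>. \<psi> (Y t \<omega>))))\<^sup>2"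
    using assms(12) by blast
  let ?F = "inf at_top (principal T)"
  let ?e = "\<lambda>t. eps_W2 (distfun M (X t)) (distfun M (Y t))"
  let ?g = "\<lambda>t. eps_W2 (distfun M (\<lambda>\<omega>. \<psi> (Y t \<omega>))) (distfun M (\<lambda>\<omega>. \<psi> (X t \<omega>)))"
  have ev: "eventually (\<lambda>t. t \<in> T \<and> t0 \<le> t) ?F"
    unfolding eventually_inf_principal using eventually_ge_at_top[of t0] by eventually_elim auto
  have bnd: "eventually (\<lambda>t. 0 \<le> ?g t \<and> ?g t \<le> L\<^sup>2 * C * ?e t) ?F"
    using ev
  proof eventually_elim
    case (elim t)
    then show ?case
      using eps_bound[OF assms(1) assms(3)[of t] assms(4)[of t] assms(5)[of t] assms(6)[of t]
          assms(8) cont lip L C] hypC elim by blast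
  qed
  have e0: "(?e \<longlongrightarrow> 0) ?F" using assms(7) by (simp add: d_ast_def)
  have hh: "((\<lambda>t. L\<^sup>2 * C * ?e t) \<longlongrightarrow> 0) ?F"
    using tendsto_mult_right_zero[OF e0, of "L\<^sup>2 * C"] .
  have "(?g \<longlongrightarrow> 0) ?F"
  proof (rule tendsto_sandwich[of "\<lambda>_. 0" _ _ "\<lambda>t. L\<^sup>2 * C * ?e t"])
    show "eventually (\<lambda>t. 0 \<le> ?g t) ?F" using bnd by (rule eventually_mono) auto
    show "eventually (\<lambda>t. ?g t \<le> L\<^sup>2 * C * ?e t) ?F" using bnd by (rule eventually_mono) auto
  qed (use hh in auto)
  then show ?thesis by (simp add: d_ast_def)
qed

end
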